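(* The following identities hold: \begin{align*}\sum_{k=1}^\infty\frac{5929k^2-4675k+914}{k(-2)^k\binom{4k}k}&=-189-30\log2, \\\sum_{k=1}^\infty\frac{39083k^2-31627k+5624}{k(-24)^k\binom{4k}k}&=40\log\frac23-117, \\\sum_{k=1}^\infty\frac{475397k^2-335665k+55072}{k(-192)^k\binom{4k}k}&=160\log\frac34-207. \end{align*} *)

theory Defs
  imports Complex_Main
begin

end

theory Submission
  imports Defs "HOL-Analysis.Analysis" "HOL-Real_Asymp.Real_Asymp"
begin

lemma beta_nat:
  "((\<lambda>t::real. t^m * (1-t)^n) has_integral (fact m * fact n / fact (m+n+1))) {0..1}"
proof -
  have h: "((\<lambda>t. t powr (real m + 1 - 1) * (1 - t) powr (real n + 1 - 1)) has_integral Beta (real m + 1) (real n + 1)) {0..1}"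
    by (rule has_integral_Beta_real) auto
  have B: "Beta (real m + 1) (real n + 1) = fact m * fact n / fact (m+n+1)"
  proof -
    have "Gamma (real m + 1) = fact m" using Gamma_fact[of m] by (simp add: add.commute)
    moreover have "Gamma (real n + 1) = fact n" using Gamma_fact[of n] by (simp add: add.commute)
    moreover have "Gamma (real m + 1 + (real n + 1)) = fact (m+n+1)"
      using Gamma_fact[of "m+n+1"] by (simp add: algebra_simps)
    ultimately show ?thesis by (simp add: Beta_def)
  qed
  show ?thesis
  proof (rule has_integral_spike_finite[of "{0,1}"])
    show "((\<lambda>t. t powr (real m + 1 - 1) * (1 - t) powr (real n + 1 - 1)) has_integral (fact m * fact n / fact (m+n+1))) {0..1}"
      using h B by simp
    fix t assume "t \<in> {0..1::real} - {0,1}"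
    then have "0 < t" "0 < 1 - t" by auto
    then show "t^m * (1-t)^n = t powr (real m + 1 - 1) * (1 - t) powr (real n + 1 - 1)"
      by (simp add: powr_realpow)
  qed simp
qed

lemma log_integral:
  fixes r s :: real
  assumes rs: "\<And>t. t \<in> {0..1} \<Longrightarrow> s*(r-t) \<ge> 1" and s: "s = 1 \<or> s = -1"
  shows "((\<lambda>t. 1/(r-t)) has_integral (ln (s*r) - ln (s*(r-1)))) {0..1}"
proof -
  have "((\<lambda>t. 1/(r-t)) has_integral ((\<lambda>t. - ln (s*(r-t))) 1 - (\<lambda>t. - ln (s*(r-t))) 0)) {0..1}"
  proof (rule fundamental_theorem_of_calculus)
    fix t :: real assume t: "t \<in> {0..1}"
    have pos: "s*(r-t) > 0" using rs[OF t] by linarith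
    have ne: "r - t \<noteq> 0" using pos by auto
    have "((\<lambda>t. - ln (s*(r-t))) has_real_derivative (- (1/(s*(r-t)) * (s*(0-1))))) (at t)"
      by (rule derivative_eq_intros refl | use pos in simp)+
    moreover have "- (1/(s*(r-t)) * (s*(0-1))) = 1/(r-t)" using s ne by auto
    ultimately show "((\<lambda>t. - ln (s*(r-t))) has_vector_derivative 1/(r-t)) (at t within {0..1})"
      by (simp add: has_real_derivative_iff_has_vector_derivative[symmetric] has_field_derivative_at_within)
  qed simp
  then show ?thesis by simp
qed

lemma geo_step:
  fixes r t C x w :: real
  assumes "(r-t)*C = x - w" "x \<noteq> 0" "r - t \<noteq> 0"
  shows "C * w^n / x^(n+1) = (w/x)^n/(r-t) - (w/x)^(Suc n)/(r-t)"
proof -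
  have e1: "a/(r-t) - a*y/(r-t) = a*(1-y)/(r-t)" for a y
    by (simp add: diff_divide_distrib right_diff_distrib)
  have e2: "1 - w/x = (r-t)*C/x" using assms by (simp add: field_simps)
  have "(w/x)^n/(r-t) - (w/x)^(Suc n)/(r-t) = (w/x)^n * (1 - w/x) / (r-t)"
    using e1[of "(w/x)^n" "w/x"] by (simp add: mult.commute)
  also have "\<dots> = (w/x)^n * ((r-t)*C/x) / (r-t)"
    unfolding e2 ..
  also have "\<dots> = (w/x)^n * C / x"
  proof -
    have "a * ((r-t)*C/x) / (r-t) = a * C / x" for a using assms(2,3) by (simp add: field_simps)
    then show ?thesis .
  qed
  also have "\<dots> = C * w^n / x^(n+1)"
    by (simp add: power_divide mult.commute)
  finally show ?thesis by simp
qed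

lemma ell_sums:
  fixes x r s c0 c1 c2 c3 :: real
  assumes x: "\<bar>x\<bar> \<ge> 2"
    and fac: "\<And>t. x - t*(1-t)^3 = (r - t)*(c0 + c1*t + c2*t^2 + c3*t^3)"
    and rs: "\<And>t. t \<in> {0..1} \<Longrightarrow> s*(r-t) \<ge> 1" and s: "s = 1 \<or> s = -1"
  shows "(\<lambda>k. integral {0..1} (\<lambda>t. (c0 + c1*t + c2*t^2 + c3*t^3) * (t*(1-t)^3)^k / x^(k+1)))
           sums (ln (s*r) - ln (s*(r-1)))"
proof -
  define Cp where "Cp t = c0 + c1*t + c2*t^2 + c3*t^3" for t :: real
  define I where "I = ln (s*r) - ln (s*(r-1))"
  define J where "J n = integral {0..1} (\<lambda>t. (t*(1-t)^3/x)^n/(r-t))" for n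
  have rt: "r - t \<noteq> 0" if "t \<in> {0..1}" for t using rs[OF that] by auto
  have x0: "x \<noteq> 0" using x by auto
  have cont_rt: "continuous_on {0..1} (\<lambda>t. f t / (r-t))" if "continuous_on {0..1} f" for f
    using that rt by (intro continuous_intros) auto
  have int_k: "(\<lambda>t. Cp t * (t*(1-t)^3)^k / x^(k+1)) integrable_on {0..1}" for k
    unfolding Cp_def using x0 by (intro integrable_continuous_interval continuous_intros) auto
  have intJ: "(\<lambda>t. (t*(1-t)^3/x)^n/(r-t)) integrable_on {0..1}" for n
    using x0 by (intro integrable_continuous_interval cont_rt continuous_intros) auto
  have pw: "(\<Sum>k<n. Cp t * (t*(1-t)^3)^k / x^(k+1)) = 1/(r-t) - (t*(1-t)^3/x)^n/(r-t)"
    if t: "t \<in> {0..1}" for t n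
  proof (induction n)
    case 0 then show ?case by simp
  next
    case (Suc n)
    have "Cp t * (t*(1-t)^3)^n / x^(n+1) = (t*(1-t)^3/x)^n/(r-t) - (t*(1-t)^3/x)^(Suc n)/(r-t)"
      using geo_step[of r t "Cp t" x "t*(1-t)^3" n] fac[of t] x0 rt[OF t] unfolding Cp_def by simp
    then show ?case using Suc by simp
  qed
  have psum: "(\<Sum>k<n. integral {0..1} (\<lambda>t. Cp t * (t*(1-t)^3)^k / x^(k+1))) = I - J n" for n
  proof -
    have "(\<Sum>k<n. integral {0..1} (\<lambda>t. Cp t * (t*(1-t)^3)^k / x^(k+1)))
        = integral {0..1} (\<lambda>t. \<Sum>k<n. Cp t * (t*(1-t)^3)^k / x^(k+1))"
      by (rule integral_sum[symmetric]) (simp_all only: finite_lessThan int_k)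
    also have "\<dots> = integral {0..1} (\<lambda>t. 1/(r-t) - (t*(1-t)^3/x)^n/(r-t))"
      by (rule integral_cong) (use pw in auto)
    also have "\<dots> = integral {0..1} (\<lambda>t. 1/(r-t)) - J n"
      unfolding J_def
      by (rule integral_diff) (use log_integral[OF rs s] intJ in auto)
    also have "integral {0..1} (\<lambda>t. 1/(r-t)) = I"
      unfolding I_def using log_integral[OF rs s] by (rule integral_unique)
    finally show ?thesis .
  qed
  have Jbound: "\<bar>J n\<bar> \<le> (1/2)^n" for n
  proof -
    have hb: "((\<lambda>t. (t*(1-t)^3/x)^n/(r-t)) has_integral J n) (cbox 0 1)"
      unfolding J_def using intJ[of n] by (simp add: has_integral_integral)
    have pb: "norm ((t*(1-t)^3/x)^n/(r-t)) \<le> (1/2)^n" if "t \<in> cbox 0 1" for t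
    proof -
      from that have t: "t \<in> {0..1}" by simp
      have a: "\<bar>t*(1-t)^3\<bar> \<le> 1" using t
        by (auto simp: abs_mult intro!: mult_le_one power_le_one)
      have b: "\<bar>t*(1-t)^3/x\<bar> \<le> 1/2" using a x
        by (auto simp: abs_divide divide_simps)
      have c: "\<bar>r - t\<bar> \<ge> 1" using rs[OF t] s by auto
      have d: "\<bar>(t*(1-t)^3/x)^n\<bar> \<le> (1/2)^n"
        unfolding power_abs by (rule power_mono[OF b]) simp
      have e: "\<bar>(t*(1-t)^3/x)^n/(r-t)\<bar> \<le> \<bar>(t*(1-t)^3/x)^n\<bar>"
        using c by (simp add: abs_divide divide_le_eq)
          (smt (verit) mult_le_cancel_left1 abs_ge_zero)
      show ?thesis using d e by simp
    qed
    have "norm (J n) \<le> (1/2)^n" using has_integral_bound[OF _ hb pb] by simp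
    then show ?thesis by simp
  qed
  have "J \<longlonglongrightarrow> 0"
  proof (rule Lim_null_comparison[of _ "\<lambda>n. (1/2)^n"])
    show "\<forall>\<^sub>F n in sequentially. norm (J n) \<le> (1/2::real)^n" using Jbound by simp
    show "(\<lambda>n. (1/2::real)^n) \<longlonglongrightarrow> 0" by (rule LIMSEQ_power_zero) simp
  qed
  then have "(\<lambda>n. I - J n) \<longlonglongrightarrow> I - 0" by (intro tendsto_intros)
  then show ?thesis unfolding sums_def Cp_def[symmetric] I_def[symmetric] psum by simp
qed

definition Bt :: "nat \<Rightarrow> nat \<Rightarrow> real" where
  "Bt m n = fact m * fact n / fact (m+n+1)"

lemma fact_add1: "(fact (n+1)::real) = (real n + 1) * fact n" by simp
lemma fact_add2: "(fact (n+2)::real) = (real n + 2) * (real n + 1) * fact n"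
  by (simp add: numeral_2_eq_2 algebra_simps)
lemma fact_add3: "(fact (n+3)::real) = (real n + 3) * (real n + 2) * (real n + 1) * fact n"
  by (simp add: numeral_3_eq_3 algebra_simps)
lemma fact_add4: "(fact (n+4)::real) = (real n + 4) * (real n + 3) * (real n + 2) * (real n + 1) * fact n"
proof -
  have "n + 4 = Suc (n+3)" by simp
  then show ?thesis by (simp only: fact_Suc fact_add3) (simp add: algebra_simps)
qed

lemma e3gen:
  fixes a b d e K c0 c1 c2 c3 k1 k2 k3 :: real
  assumes "a \<noteq> 0" "b \<noteq> 0" "d \<noteq> 0" "e \<noteq> 0"
  shows "K*(c0*b*d*e + c1*k1*d*e + c2*k1*k2*e + c3*k1*k2*k3)/(a*b*d*e) = c0*(K/a) + c1*(k1*K/(b*a)) + c2*(k2*k1*K/(d*b*a)) + c3*(k3*k2*k1*K/(e*d*b*a))"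
  using assms by (simp add: field_simps)

lemma R3gen:
  fixes a b d e R X x c c0 K A Q c1 k1 c2 k2 c3 k3 :: real
  assumes "a \<noteq> 0" "b \<noteq> 0" "d \<noteq> 0" "e \<noteq> 0" "R \<noteq> 0" "X \<noteq> 0" "x \<noteq> 0"
  shows "c*((c0*(K*A*Q/(a*R)) + c1*(k1*K*A*Q/(b*a*R)) + c2*(k2*k1*K*A*Q/(d*b*a*R)) + c3*(k3*k2*k1*K*A*Q/(e*d*b*a*R)))/(x*X))
     = (A*Q/(R*X)) * (c*(c0*(K/a) + c1*(k1*K/(b*a)) + c2*(k2*k1*K/(d*b*a)) + c3*(k3*k2*k1*K/(e*d*b*a)))/x)"
  using assms by (simp add: field_simps)

lemma discrete_id:
  fixes x c c0 c1 c2 c3 a2 a1 a0 b2 b1 b0 :: real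
  assumes x0: "x \<noteq> 0"
  and poly: "\<And>K::real. x * (a2*K^2+a1*K+a0) * ((4*K+1)*(4*K+2)*(4*K+3)*(4*K+4)) =
      x*(b2*K^2+b1*K+b0)*((4*K+1)*(4*K+2)*(4*K+3)*(4*K+4))
      - (b2*(K+1)^2+b1*(K+1)+b0)*K*(3*K+1)*(3*K+2)*(3*K+3)
      + c*K*(c0*(4*K+2)*(4*K+3)*(4*K+4) + c1*(K+1)*(4*K+3)*(4*K+4) + c2*(K+1)*(K+2)*(4*K+4) + c3*(K+1)*(K+2)*(K+3))"
  shows "(let k = real (Suc m) in (a2*k^2 + a1*k + a0)/(k * x^Suc m * real((4*Suc m) choose Suc m)))
    = (b2*(real (Suc m))^2 + b1*real (Suc m) + b0) * Bt m (3*Suc m) / x^(Suc m)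
      - (b2*(real (Suc (Suc m)))^2 + b1*real (Suc (Suc m)) + b0) * Bt (Suc m) (3*Suc (Suc m)) / x^(Suc (Suc m))
      + c * ((c0 * Bt (Suc m) (3*Suc m) + c1 * Bt (Suc m + 1) (3*Suc m) + c2 * Bt (Suc m + 2) (3*Suc m)
             + c3 * Bt (Suc m + 3) (3*Suc m)) / x^(Suc m + 1))"
proof -
  define k where "k = Suc m"
  define K where "K = real k"
  define A where "A = (fact m :: real)"
  define Q where "Q = (fact (3*k) :: real)"
  define R where "R = (fact (4*k) :: real)"
  define X where "X = x^k"
  have A0: "A > 0" "Q > 0" "R > 0" unfolding A_def Q_def R_def by auto
  have X0: "X \<noteq> 0" unfolding X_def using x0 by simp
  have K0: "K > 0" unfolding K_def k_def by simp
  have fk: "(fact k :: real) = K * A" unfolding k_def K_def A_def by simp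
  have fk1: "(fact (k+1) :: real) = (K+1) * K * A" unfolding fact_add1 fk K_def by simp
  have fk2: "(fact (k+2) :: real) = (K+2) * (K+1) * K * A" unfolding fact_add2 fk K_def by simp
  have fk3: "(fact (k+3) :: real) = (K+3) * (K+2) * (K+1) * K * A" unfolding fact_add3 fk K_def by simp
  have f3: "(fact (3*k+3) :: real) = (3*K+3)*(3*K+2)*(3*K+1) * Q" unfolding fact_add3 Q_def K_def by simp
  have f41: "(fact (4*k+1) :: real) = (4*K+1) * R" unfolding fact_add1 R_def K_def by simp
  have f42: "(fact (4*k+2) :: real) = (4*K+2)*(4*K+1) * R" unfolding fact_add2 R_def K_def by simp
  have f43: "(fact (4*k+3) :: real) = (4*K+3)*(4*K+2)*(4*K+1) * R" unfolding fact_add3 R_def K_def by simp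
  have f44: "(fact (4*k+4) :: real) = (4*K+4)*(4*K+3)*(4*K+2)*(4*K+1) * R" unfolding fact_add4 R_def K_def by simp
  have bin: "real ((4*k) choose k) = R / (K * A * Q)"
    using binomial_fact[of k "4*k", where 'a=real] fk unfolding R_def Q_def by simp
  have B1: "Bt m (3*k) = A * Q / R" unfolding Bt_def A_def Q_def R_def k_def
    by (simp add: algebra_simps)
  have B2: "Bt k (3*Suc k) = K * A * ((3*K+3)*(3*K+2)*(3*K+1) * Q) / ((4*K+4)*(4*K+3)*(4*K+2)*(4*K+1) * R)"
  proof -
    have "k + 3*Suc k + 1 = 4*k+4" "3 * Suc k = 3*k+3" by simp_all
    then show ?thesis unfolding Bt_def by (simp only: fk f3 f44)
  qed
  have B30: "Bt k (3*k) = K * A * Q / ((4*K+1) * R)"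
  proof -
    have "k + 3*k + 1 = 4*k+1" by simp
    then show ?thesis unfolding Bt_def by (simp only: fk f41 Q_def)
  qed
  have B31: "Bt (k+1) (3*k) = (K+1) * K * A * Q / ((4*K+2)*(4*K+1) * R)"
  proof -
    have "k + 1 + 3*k + 1 = 4*k+2" by simp
    then show ?thesis unfolding Bt_def by (simp only: fk1 f42 Q_def)
  qed
  have B32: "Bt (k+2) (3*k) = (K+2) * (K+1) * K * A * Q / ((4*K+3)*(4*K+2)*(4*K+1) * R)"
  proof -
    have "k + 2 + 3*k + 1 = 4*k+3" by simp
    then show ?thesis unfolding Bt_def by (simp only: fk2 f43 Q_def)
  qed
  have B33: "Bt (k+3) (3*k) = (K+3) * (K+2) * (K+1) * K * A * Q / ((4*K+4)*(4*K+3)*(4*K+2)*(4*K+1) * R)"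
  proof -
    have "k + 3 + 3*k + 1 = 4*k+4" by simp
    then show ?thesis unfolding Bt_def by (simp only: fk3 f44 Q_def)
  qed
  have KK: "real (Suc k) = K + 1" unfolding K_def by simp
  have pos: "(4*K+1) > 0" "(4*K+2) > 0" "(4*K+3) > 0" "(4*K+4) > 0" using K0 by auto
  define Z where "Z = A*Q/(R*X)"
  define D where "D = (4*K+4)*(4*K+3)*(4*K+2)*(4*K+1)"
  have D0: "D > 0" unfolding D_def using pos by simp
  have key: "a2*K^2 + a1*K + a0 = (b2*K^2 + b1*K + b0) - (b2*(K+1)^2 + b1*(K+1) + b0) * (K*((3*K+3)*(3*K+2)*(3*K+1))) / (x*D)
     + c * (c0 * (K / (4*K+1)) + c1 * ((K+1)*K / ((4*K+2)*(4*K+1))) + c2 * ((K+2)*(K+1)*K/((4*K+3)*(4*K+2)*(4*K+1)))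
            + c3 * ((K+3)*(K+2)*(K+1)*K / D)) / x"
  proof -
    define P where "P = a2*K^2 + a1*K + a0"
    define p where "p = b2*K^2 + b1*K + b0"
    define p' where "p' = b2*(K+1)^2 + b1*(K+1) + b0"
    define D' where "D' = (4*K+1)*(4*K+2)*(4*K+3)*(4*K+4)"
    define T where "T = (3*K+1)*(3*K+2)*(3*K+3)"
    define V where "V = K*(c0*(4*K+2)*(4*K+3)*(4*K+4) + c1*(K+1)*(4*K+3)*(4*K+4) + c2*(K+1)*(K+2)*(4*K+4) + c3*(K+1)*(K+2)*(K+3))"
    have polyK: "x*P*D' = x*p*D' - p'*K*T + c*V"
      using poly[of K] unfolding P_def p_def p'_def D'_def T_def V_def by (simp add: mult.assoc)
    have D'0: "D' \<noteq> 0" unfolding D'_def using pos by simp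
    have aux: "P = p - (p'*K*T)/(x*D') + c*(V/D')/x"
      using polyK x0 D'0 by (simp add: field_simps)
    have e1: "D = D'" unfolding D_def D'_def by (simp add: algebra_simps)
    have e2: "(p'*K*T)/(x*D') = p' * (K*((3*K+3)*(3*K+2)*(3*K+1))) / (x*D)"
      unfolding e1 T_def by (simp add: algebra_simps)
    have e3: "V/D' = c0 * (K / (4*K+1)) + c1 * ((K+1)*K / ((4*K+2)*(4*K+1))) + c2 * ((K+2)*(K+1)*K/((4*K+3)*(4*K+2)*(4*K+1)))
            + c3 * ((K+3)*(K+2)*(K+1)*K / D)"
      unfolding V_def D'_def D_def using pos e3gen[of "4*K+1" "4*K+2" "4*K+3" "4*K+4" K c0 c1 "K+1" c2 "K+2" c3 "K+3"] by simp
    have aux2: "P = p - p' * (K*((3*K+3)*(3*K+2)*(3*K+1))) / (x*D)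
     + c * (c0 * (K / (4*K+1)) + c1 * ((K+1)*K / ((4*K+2)*(4*K+1))) + c2 * ((K+2)*(K+1)*K/((4*K+3)*(4*K+2)*(4*K+1)))
            + c3 * ((K+3)*(K+2)*(K+1)*K / D)) / x"
      using aux by (simp only: e2 e3)
    then show ?thesis unfolding P_def p_def p'_def .
  qed
  have L: "(a2*K^2 + a1*K + a0)/(K * X * (R / (K * A * Q))) = Z * (a2*K^2 + a1*K + a0)"
    unfolding Z_def using A0 X0 K0 by (simp add: field_simps)
  have R1: "(b2*K^2 + b1*K + b0) * (A * Q / R) / X = Z * (b2*K^2 + b1*K + b0)"
    unfolding Z_def by simp
  have R2: "(b2*(K+1)^2 + b1*(K+1) + b0) * (K * A * ((3*K+3)*(3*K+2)*(3*K+1) * Q) / ((4*K+4)*(4*K+3)*(4*K+2)*(4*K+1) * R)) / (x * X)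
      = Z * ((b2*(K+1)^2 + b1*(K+1) + b0) * (K*((3*K+3)*(3*K+2)*(3*K+1))) / (x*D))"
    unfolding Z_def D_def by (simp add: field_simps)
  have R3: "c * ((c0 * (K * A * Q / ((4*K+1) * R)) + c1 * ((K+1) * K * A * Q / ((4*K+2)*(4*K+1) * R))
      + c2 * ((K+2) * (K+1) * K * A * Q / ((4*K+3)*(4*K+2)*(4*K+1) * R))
      + c3 * ((K+3) * (K+2) * (K+1) * K * A * Q / ((4*K+4)*(4*K+3)*(4*K+2)*(4*K+1) * R))) / (x * X))
     = Z * (c * (c0 * (K / (4*K+1)) + c1 * ((K+1)*K / ((4*K+2)*(4*K+1))) + c2 * ((K+2)*(K+1)*K/((4*K+3)*(4*K+2)*(4*K+1)))
            + c3 * ((K+3)*(K+2)*(K+1)*K / D)) / x)"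
    unfolding Z_def D_def using R3gen[of "4*K+1" "4*K+2" "4*K+3" "4*K+4" R X x c c0 K A Q c1 "K+1" c2 "K+2" c3 "K+3"] pos A0 X0 x0 by simp
  have gen: "z1*(z2 - z3 + z4) = z1*z2 - z1*z3 + z1*z4" for z1 z2 z3 z4 :: real by (simp add: algebra_simps)
  have xs: "x^(k+1) = x*X" "x^(Suc k) = x*X" by (simp_all add: X_def)
  show ?thesis
    unfolding k_def[symmetric] K_def[symmetric] Let_def X_def[symmetric] xs bin B1 B2 B30 B31 B32 B33 KK R1 R2 R3
    unfolding L unfolding key by (rule gen)
qed

lemma Bt_le1: "Bt m n \<le> 1"
proof -
  have "fact m * fact n \<le> (fact (m+n) :: nat)"
    by (rule dvd_imp_le[OF fact_fact_dvd_fact]) simp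
  then have "(fact m * fact n :: real) \<le> fact (m+n)"
    by (metis of_nat_fact of_nat_le_iff of_nat_mult)
  also have "(fact (m+n) :: real) \<le> fact (m+n+1)" by (rule fact_mono) simp
  finally show ?thesis unfolding Bt_def by (simp add: divide_le_eq_1)
qed

lemma Bt_ge0: "Bt m n \<ge> 0" unfolding Bt_def by simp

lemma main:
  fixes x c c0 c1 c2 c3 r s a2 a1 a0 b2 b1 b0 :: real
  assumes x: "\<bar>x\<bar> \<ge> 2"
    and fac: "\<And>t. x - t*(1-t)^3 = (r - t)*(c0 + c1*t + c2*t^2 + c3*t^3)"
    and rs: "\<And>t. t \<in> {0..1} \<Longrightarrow> s*(r-t) \<ge> 1" and s: "s = 1 \<or> s = -1"
    and poly: "\<And>K::real. x * (a2*K^2+a1*K+a0) * ((4*K+1)*(4*K+2)*(4*K+3)*(4*K+4)) =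
      x*(b2*K^2+b1*K+b0)*((4*K+1)*(4*K+2)*(4*K+3)*(4*K+4))
      - (b2*(K+1)^2+b1*(K+1)+b0)*K*(3*K+1)*(3*K+2)*(3*K+3)
      + c*K*(c0*(4*K+2)*(4*K+3)*(4*K+4) + c1*(K+1)*(4*K+3)*(4*K+4) + c2*(K+1)*(K+2)*(4*K+4) + c3*(K+1)*(K+2)*(K+3))"
  shows "(\<lambda>n. let k = real (Suc n) in (a2*k^2 + a1*k + a0)/(k * x^Suc n * real((4*Suc n) choose Suc n)))
    sums ((b2+b1+b0)/(4*x) + c*((ln(s*r) - ln(s*(r-1))) - (c0 + c1/2 + c2/3 + c3/4)/x))"
proof -
  have x0: "x \<noteq> 0" using x by auto
  define L where "L = ln(s*r) - ln(s*(r-1))"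
  define ellc where "ellc k = (c0*Bt k (3*k) + c1*Bt (k+1) (3*k) + c2*Bt (k+2) (3*k) + c3*Bt (k+3) (3*k))/x^(k+1)" for k
  define g where "g m = (b2*(real (Suc m))^2 + b1*real (Suc m) + b0) * Bt m (3*Suc m)/x^(Suc m)" for m
  have ell_eq: "integral {0..1} (\<lambda>t. (c0 + c1*t + c2*t^2 + c3*t^3) * (t*(1-t)^3)^k / x^(k+1)) = ellc k" for k
  proof -
    have hi: "((\<lambda>t. (c0*(t^k*(1-t)^(3*k)) + c1*(t^(k+1)*(1-t)^(3*k)) + c2*(t^(k+2)*(1-t)^(3*k)) + c3*(t^(k+3)*(1-t)^(3*k)))/x^(k+1)) has_integral ellc k) {0..1}"
      unfolding ellc_def Bt_def by (intro has_integral_divide has_integral_add has_integral_mult_right beta_nat)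
    have feq: "(\<lambda>t. (c0*(t^k*(1-t)^(3*k)) + c1*(t^(k+1)*(1-t)^(3*k)) + c2*(t^(k+2)*(1-t)^(3*k)) + c3*(t^(k+3)*(1-t)^(3*k)))/x^(k+1))
        = (\<lambda>t. (c0 + c1*t + c2*t^2 + c3*t^3) * (t*(1-t)^3)^k / x^(k+1))"
    proof
      fix t :: real
      have e: "(1-t)^(3*k) = ((1-t)^3)^k" by (rule power_mult)
      then show "(c0*(t^k*(1-t)^(3*k)) + c1*(t^(k+1)*(1-t)^(3*k)) + c2*(t^(k+2)*(1-t)^(3*k)) + c3*(t^(k+3)*(1-t)^(3*k)))/x^(k+1)
        = (c0 + c1*t + c2*t^2 + c3*t^3) * (t*(1-t)^3)^k / x^(k+1)"
        unfolding e power_mult_distrib by (simp add: power_add algebra_simps power2_eq_square)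
    qed
    show ?thesis using hi unfolding feq by (rule integral_unique)
  qed
  have ell: "ellc sums L"
    using ell_sums[OF x fac rs s] unfolding ell_eq L_def .
  have ell': "(\<lambda>m. ellc (Suc m)) sums (L - ellc 0)"
    using ell sums_Suc_iff[of ellc "L - ellc 0"] by simp
  have g0: "g \<longlonglongrightarrow> 0"
  proof (rule Lim_null_comparison)
    define C where "C = \<bar>b2\<bar> + \<bar>b1\<bar> + \<bar>b0\<bar>"
    show "\<forall>\<^sub>F m in sequentially. norm (g m) \<le> C * ((real m + 1)^2 * (1/2)^m)"
    proof (intro always_eventually allI)
      fix m
      define M where "M = real m + 1"
      have M1: "M \<ge> 1" unfolding M_def by simp
      have "\<bar>b2*M^2 + b1*M + b0\<bar> \<le> \<bar>b2*M^2\<bar> + \<bar>b1*M\<bar> + \<bar>b0\<bar>"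
        using abs_triangle_ineq[of "b2*M^2+b1*M" b0] abs_triangle_ineq[of "b2*M^2" "b1*M"] by linarith
      also have "\<dots> = \<bar>b2\<bar>*M^2 + \<bar>b1\<bar>*M + \<bar>b0\<bar>" using M1 by (simp add: abs_mult)
      also have "\<dots> \<le> C * M^2"
      proof -
        have m2: "M \<le> M^2" "1 \<le> M^2" using M1 by (auto simp: power2_eq_square intro: order_trans[OF M1] mult_right_mono[of 1 M M, simplified] one_le_power)
        have "\<bar>b1\<bar>*M \<le> \<bar>b1\<bar>*M^2" by (rule mult_left_mono[OF m2(1)]) simp
        moreover have "\<bar>b0\<bar> \<le> \<bar>b0\<bar>*M^2" using mult_left_mono[OF m2(2), of "\<bar>b0\<bar>"] by simp
        ultimately show ?thesis unfolding C_def by (simp add: distrib_right)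
      qed
      finally have pb: "\<bar>b2*M^2 + b1*M + b0\<bar> \<le> C * M^2" .
      have xb: "\<bar>x^Suc m\<bar> \<ge> 2^Suc m" unfolding power_abs by (rule power_mono[OF x]) simp
      have "norm (g m) = \<bar>b2*M^2 + b1*M + b0\<bar> * Bt m (3*Suc m) / \<bar>x^Suc m\<bar>"
        unfolding g_def M_def using Bt_ge0 by (simp add: abs_mult abs_divide add.commute)
      also have "\<dots> \<le> C * M^2 * 1 / 2^Suc m"
        using pb Bt_le1[of m "3*Suc m"] Bt_ge0[of m "3*Suc m"] xb
        by (intro frac_le mult_mono) auto
      also have "\<dots> \<le> C * (M^2 * (1/2)^m)"
        unfolding C_def by (simp add: power_one_over divide_simps)
      finally show "norm (g m) \<le> C * ((real m + 1)^2 * (1/2)^m)" unfolding M_def .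
    qed
    have "(\<lambda>m. (real m + 1)^2 * (1/2::real)^m) \<longlonglongrightarrow> 0" by real_asymp
    then show "(\<lambda>m. C * ((real m + 1)^2 * (1/2)^m)) \<longlonglongrightarrow> 0"
      by (rule tendsto_mult_right_zero)
  qed
  have tel: "(\<lambda>m. g m - g (Suc m)) sums g 0"
    using sums_minus[OF telescope_sums[OF g0]] by simp
  have S: "(\<lambda>m. (g m - g (Suc m)) + c * ellc (Suc m)) sums (g 0 + c * (L - ellc 0))"
    by (intro sums_add sums_mult tel ell')
  have eqf: "(\<lambda>n. let k = real (Suc n) in (a2*k^2 + a1*k + a0)/(k * x^Suc n * real((4*Suc n) choose Suc n)))
     = (\<lambda>m. (g m - g (Suc m)) + c * ellc (Suc m))"
    unfolding g_def ellc_def by (rule ext, rule discrete_id[OF x0 poly])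
  have c0: "g 0 = (b2+b1+b0)/(4*x)" unfolding g_def Bt_def by (simp add: eval_nat_numeral)
  have c1: "ellc 0 = (c0 + c1/2 + c2/3 + c3/4)/x" unfolding ellc_def Bt_def by (simp add: eval_nat_numeral)
  show ?thesis using S unfolding eqf c0 c1 L_def .
qed


theorem lemma3p4:
  shows "((\<lambda>n. let k = real (Suc n) in
            (5929 * k^2 - 4675 * k + 914) /
            (k * (-2) ^ Suc n * real ((4 * Suc n) choose (Suc n))))
           sums (-189 - 30 * ln 2)) \<and>
         ((\<lambda>n. let k = real (Suc n) in
            (39083 * k^2 - 31627 * k + 5624) /
            (k * (-24) ^ Suc n * real ((4 * Suc n) choose (Suc n))))
           sums (40 * ln (2/3) - 117)) \<and>
         ((\<lambda>n. let k = real (Suc n) in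
            (475397 * k^2 - 335665 * k + 55072) /
            (k * (-192) ^ Suc n * real ((4 * Suc n) choose (Suc n))))
           sums (160 * ln (3/4) - 207))"
proof (intro conjI)
  have A: "(\<lambda>n. let k = real (Suc n) in (5929*k^2 + (-4675)*k + 914)/(k * (-2)^Suc n * real((4*Suc n) choose Suc n)))
    sums ((5632+(-4864)+914)/(4*(-2)) + (-30)*((ln(1*2) - ln(1*(2-1))) - ((-1) + (-1)/2 + 1/3 + (-1)/4)/(-2)))"
    by (rule main) (auto simp: algebra_simps power2_eq_square power3_eq_cube)
  show "(\<lambda>n. let k = real (Suc n) in
            (5929 * k^2 - 4675 * k + 914) /
            (k * (-2) ^ Suc n * real ((4 * Suc n) choose (Suc n))))
           sums (-189 - 30 * ln 2)"
    using A by (simp add: Let_def)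
  have B: "(\<lambda>n. let k = real (Suc n) in (39083*k^2 + (-31627)*k + 5624)/(k * (-24)^Suc n * real((4*Suc n) choose Suc n)))
    sums ((38912+(-31744)+5624)/(4*(-24)) + (-40)*((ln(1*3) - ln(1*(3-1))) - ((-8) + (-3)/2 + 0/3 + (-1)/4)/(-24)))"
    by (rule main) (auto simp: algebra_simps power2_eq_square power3_eq_cube)
  show "(\<lambda>n. let k = real (Suc n) in
            (39083 * k^2 - 31627 * k + 5624) /
            (k * (-24) ^ Suc n * real ((4 * Suc n) choose (Suc n))))
           sums (40 * ln (2/3) - 117)"
    using B by (simp add: Let_def ln_div)
  have C: "(\<lambda>n. let k = real (Suc n) in (475397*k^2 + (-335665)*k + 55072)/(k * (-192)^Suc n * real((4*Suc n) choose Suc n)))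
    sums ((475136+(-335872)+55072)/(4*(-192)) + 160*((ln((-1)*(-3)) - ln((-1)*((-3)-1))) - (64 + (-21)/2 + 6/3 + (-1)/4)/(-192)))"
    by (rule main) (auto simp: algebra_simps power2_eq_square power3_eq_cube)
  show "(\<lambda>n. let k = real (Suc n) in
            (475397 * k^2 - 335665 * k + 55072) /
            (k * (-192) ^ Suc n * real ((4 * Suc n) choose (Suc n))))
           sums (160 * ln (3/4) - 207)"
    using C by (simp add: Let_def ln_div)
qed

end
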